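(* Let $(M_t)$ be the boundary Markov chain started from any fixed initial state, with steps $X_t=M_{t+1}-M_t$, and define $V_T(\gamma)=\sum_{t<T}|X_t|^\gamma$. For every $\gamma>3/2$ and every $\varepsilon>0$, almost surely \[ \limsup_{T\to\infty} \frac{V_T(\gamma)}{T^{2\gamma/3}\log^{2\gamma/3+\varepsilon} T} < \infty . \]
   Context: The boundary Markov chain is the Markov chain $(M_n)_{n\ge0}$ on $\{0,1,2,\dots\}$ with $M_{n+1}=M_n+X_n$. Given $M_n=m$, its step $X_n$ has the law \[ \mathbb P(X_n=1\mid M_n=m)=\frac{2m+3}{3m+3}. \] For $1\le k\le m$, \[ \mathbb P(X_n=-k\mid M_n=m)=\frac{2(2k-2)!}{(k-1)!(k+1)!}\cdot\frac{m!^2(2m-2k+1)!}{(m-k)!^2(2m+1)!}. \] *)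

theory Defs
  imports "HOL-Probability.Probability"
begin

definition bmc_kernel :: "nat \<Rightarrow> nat \<Rightarrow> real" where
  "bmc_kernel m j =
    (if j = Suc m then (2 * real m + 3) / (3 * real m + 3)
     else if j < m then
       (let k = m - j in
         (2 * fact (2 * k - 2) / (fact (k - 1) * fact (k + 1))) *
         (fact m ^ 2 * fact (2 * m - 2 * k + 1) / (fact (m - k) ^ 2 * fact (2 * m + 1))))
     else 0)"

definition boundary_markov_chain ::
    "'a measure \<Rightarrow> (nat \<Rightarrow> 'a \<Rightarrow> nat) \<Rightarrow> nat \<Rightarrow> bool" where
  "boundary_markov_chain P Mc m0 \<longleftrightarrow>
     prob_space P \<and>
     (\<forall>n. Mc n \<in> measurable P (count_space UNIV)) \<and>
     measure P {\<omega> \<in> space P. Mc 0 \<omega> = m0} = 1 \<and>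
     (\<forall>n (h :: nat \<Rightarrow> nat) j.
        measure P {\<omega> \<in> space P. (\<forall>i\<le>n. Mc i \<omega> = h i) \<and> Mc (Suc n) \<omega> = j}
        = measure P {\<omega> \<in> space P. \<forall>i\<le>n. Mc i \<omega> = h i} * bmc_kernel (h n) j)"

definition bmc_V :: "(nat \<Rightarrow> 'a \<Rightarrow> nat) \<Rightarrow> real \<Rightarrow> nat \<Rightarrow> 'a \<Rightarrow> real" where
  "bmc_V Mc \<gamma> T \<omega> = (\<Sum>t<T. \<bar>real (Mc (Suc t) \<omega>) - real (Mc t \<omega>)\<bar> powr \<gamma>)"

end

theory Submission
  imports Defs
begin


lemma frac_helper: "B > 0 \<Longrightarrow> D > 0 \<Longrightarrow> A * D = C * B \<Longrightarrow> (A::real)/B = C/D"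
  by (simp add: frac_eq_eq)

lemma frac_le_helper: "D > 0 \<Longrightarrow> E > 0 \<Longrightarrow> r * E \<le> D \<Longrightarrow> (r::real)/D \<le> 1/E"
  by (simp add: divide_simps mult.commute)

definition Qf :: "nat \<Rightarrow> nat \<Rightarrow> real" where
  "Qf n d = fact (n+d) ^ 2 * fact (2*n+1) / (fact n ^ 2 * fact (2*(n+d)+1))"

lemma Qf_Suc: "Qf n (Suc d) = Qf n d * ((real (n+d) + 1) / (2 * (2 * real (n+d) + 3)))"
proof -
  define x where "x = real (n+d)"
  define a where "a = (fact (n+d) :: real)"
  define c where "c = (fact (2*(n+d)+1) :: real)"
  have a0: "a > 0" "c > 0" "x \<ge> 0" by (auto simp: a_def c_def x_def)
  have e1: "fact (n + Suc d) = (x + 1) * a"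
    by (simp add: fact_Suc algebra_simps x_def a_def)
  have e2: "fact (2*(n + Suc d)+1) = (2*x+3) * (2*x+2) * c"
  proof -
    have "2*(n + Suc d)+1 = Suc (Suc (2*(n+d)+1))" by simp
    then show ?thesis by (simp only: fact_Suc) (simp add: algebra_simps x_def c_def)
  qed
  have "Qf n (Suc d) = ((x + 1) * a)^2 * fact (2*n+1) / (fact n ^ 2 * ((2*x+3) * (2*x+2) * c))"
    unfolding Qf_def e1[symmetric] e2[symmetric] by simp
  also have "\<dots> = (a^2 * fact (2*n+1) * (x + 1)) / (fact n ^ 2 * c * (2 * (2 * x + 3)))"
    apply (rule frac_helper)
    subgoal using a0 by (intro mult_pos_pos) auto
    subgoal using a0 by (intro mult_pos_pos) auto
    subgoal by (simp add: power2_eq_square algebra_simps)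
    done
  also have "\<dots> = (a^2 * fact (2*n+1) / (fact n ^ 2 * c)) * ((x + 1) / (2 * (2 * x + 3)))"
    by simp
  also have "a^2 * fact (2*n+1) / (fact n ^ 2 * c) = Qf n d" by (simp add: Qf_def a_def c_def)
  finally show ?thesis by (simp add: x_def)
qed

lemma Qf_le: "Qf n d \<le> (1/4) ^ d"
proof (induction d)
  case 0 then show ?case by (simp add: Qf_def)
next
  case (Suc d)
  have r: "(real (n+d) + 1) / (2 * (2 * real (n+d) + 3)) \<le> 1/4" by (simp add: field_simps)
  have "Qf n (Suc d) \<le> (1/4)^d * (1/4)"
    unfolding Qf_Suc by (rule mult_mono[OF Suc r]) simp_all
  then show ?case by simp
qed

definition Rf :: "nat \<Rightarrow> real" where
  "Rf j = fact (2*j) / (fact j ^ 2 * 4 ^ j)"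

lemma Rf_Suc: "Rf (Suc j) = Rf j * ((2 * real j + 1) / (2 * real j + 2))"
proof -
  define x where "x = real j"
  define a where "a = (fact j :: real)"
  define c where "c = (fact (2*j) :: real)"
  have a0: "a > 0" "c > 0" "x \<ge> 0" by (auto simp: a_def c_def x_def)
  have e1: "fact (Suc j) = (x + 1) * a"
    by (simp add: fact_Suc algebra_simps x_def a_def)
  have e2: "fact (2*Suc j) = (2*x+2) * (2*x+1) * c"
  proof -
    have "2*Suc j = Suc (Suc (2*j))" by simp
    then show ?thesis by (simp only: fact_Suc) (simp add: algebra_simps x_def c_def)
  qed
  have "Rf (Suc j) = (2*x+2) * (2*x+1) * c / (((x + 1) * a)^2 * (4 * 4^j))"
    unfolding Rf_def e1[symmetric] e2[symmetric] by simp
  also have "\<dots> = (c * (2 * x + 1)) / (a^2 * 4^j * (2 * x + 2))"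
    apply (rule frac_helper)
    subgoal using a0 by (intro mult_pos_pos) auto
    subgoal using a0 by (intro mult_pos_pos) auto
    subgoal by (simp add: power2_eq_square algebra_simps)
    done
  also have "\<dots> = (c / (a^2 * 4^j)) * ((2 * x + 1) / (2 * x + 2))"
    by simp
  also have "c / (a^2 * 4^j) = Rf j" by (simp add: Rf_def a_def c_def)
  finally show ?thesis by (simp add: x_def)
qed

lemma Rf_nonneg: "Rf j \<ge> 0" by (simp add: Rf_def)

lemma Rf_sq: "Rf j ^ 2 * (2 * real j + 1) \<le> 1"
proof (induction j)
  case 0 then show ?case by (simp add: Rf_def)
next
  case (Suc j)
  define x where "x = real j"
  have x0: "x \<ge> 0" by (simp add: x_def)
  have "Rf (Suc j) ^ 2 * (2 * real (Suc j) + 1) =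
        (Rf j ^ 2 * (2 * x + 1)) * ((2 * x + 1) * (2 * x + 3) / (2 * x + 2)^2)"
    unfolding Rf_Suc x_def using x0 by (simp add: field_simps power2_eq_square)
  also have "\<dots> \<le> 1 * 1"
  proof (rule mult_mono)
    show "Rf j ^ 2 * (2 * x + 1) \<le> 1" using Suc by (simp add: x_def)
    have "(2 * x + 1) * (2 * x + 3) \<le> (2 * x + 2)^2" by (simp add: power2_eq_square algebra_simps)
    moreover have "(2 * x + 2)^2 > 0" using x0 by simp
    ultimately show "(2 * x + 1) * (2 * x + 3) / (2 * x + 2)^2 \<le> 1" by simp
    show "(0::real) \<le> 1" by simp
    show "0 \<le> (2 * x + 1) * (2 * x + 3) / (2 * x + 2)^2" using x0 by simp
  qed
  finally show ?case by simp
qed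

lemma kernel_bound:
  assumes "1 \<le> k" "k \<le> m"
  shows "bmc_kernel m (m - k) \<le> real k powr (-5/2)"
proof -
  obtain j where kj: "k = Suc j" using assms by (cases k) auto
  obtain n where mn: "m = n + k" using assms by (metis add.commute le_add_diff_inverse)
  have jm: "m - k < m" using assms by simp
  have jn: "m - k \<noteq> Suc m" by simp
  have mk: "m - (m - k) = k" using assms by simp
  have "bmc_kernel m (m - k) = (let k = m - (m - k) in
         (2 * fact (2 * k - 2) / (fact (k - 1) * fact (k + 1))) *
         (fact m ^ 2 * fact (2 * m - 2 * k + 1) / (fact (m - k) ^ 2 * fact (2 * m + 1))))"
    unfolding bmc_kernel_def by (simp only: if_not_P[OF jn] if_P[OF jm])
  also have "\<dots> = (2 * fact (2 * k - 2) / (fact (k - 1) * fact (k + 1))) *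
      (fact m ^ 2 * fact (2 * m - 2 * k + 1) / (fact (m - k) ^ 2 * fact (2 * m + 1)))"
    by (simp only: Let_def mk)
  finally have K: "bmc_kernel m (m - k) = \<dots>" .
  have Q: "fact m ^ 2 * fact (2 * m - 2 * k + 1) / (fact (m - k) ^ 2 * fact (2 * m + 1)) = Qf n k"
  proof -
    have "2 * m - 2 * k + 1 = 2*n+1" "m - k = n" using mn by auto
    then show ?thesis unfolding Qf_def mn by simp
  qed
  have F1: "2 * fact (2 * k - 2) / (fact (k - 1) * fact (k + 1)) = 2 * Rf j * 4^j / ((real j + 1) * (real j + 2))"
  proof -
    have f: "fact (k+1) = (real j + 2) * (real j + 1) * (fact j :: real)"
      unfolding kj by (simp add: fact_Suc algebra_simps)
    have "2 * k - 2 = 2 * j" "k - 1 = j" using kj by auto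
    then have "2 * fact (2 * k - 2) / (fact (k - 1) * fact (k + 1)) = 2 * fact (2*j) / (fact j * ((real j + 2) * (real j + 1) * fact j))"
      using f by simp
    also have "\<dots> = 2 * fact (2 * j) / (fact j ^ 2 * ((real j + 1) * (real j + 2)))"
      by (simp add: power2_eq_square mult_ac)
    also have "\<dots> = 2 * Rf j * 4^j / ((real j + 1) * (real j + 2))"
      by (simp add: Rf_def)
    finally show ?thesis .
  qed
  have "bmc_kernel m (m - k) \<le> (2 * Rf j * 4^j / ((real j + 1) * (real j + 2))) * (1/4)^k"
    unfolding K Q F1 by (rule mult_left_mono[OF Qf_le]) (simp add: Rf_nonneg)
  also have "\<dots> = (2 * Rf j * 4^j) / (((real j + 1) * (real j + 2)) * (4 * 4^j))"
    unfolding kj by (simp add: power_divide)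
  also have "\<dots> = Rf j / (2 * (real j + 1) * (real j + 2))"
    apply (rule frac_helper)
    subgoal by (intro mult_pos_pos) auto
    subgoal by (intro mult_pos_pos) auto
    subgoal by (simp add: algebra_simps)
    done
  also have "\<dots> \<le> real k powr (-5/2)"
  proof -
    have s: "Rf j ^ 2 * (real j + 1) \<le> 1"
    proof -
      have "Rf j ^ 2 * (real j + 1) \<le> Rf j ^ 2 * (2 * real j + 1)"
        by (rule mult_left_mono) auto
      then show ?thesis using Rf_sq[of j] by linarith
    qed
    have sq: "Rf j * sqrt (real j + 1) \<le> 1"
    proof -
      have "(Rf j * sqrt (real j + 1))^2 \<le> 1^2" using s by (simp add: power_mult_distrib)
      then show ?thesis by (rule power2_le_imp_le) simp
    qed
    have kp: "real k powr (-5/2) = 1 / ((real j + 1)^2 * sqrt (real j + 1))"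
    proof -
      have k1: "real k = real j + 1" using kj by simp
      have kpos: "real k > 0" using k1 by simp
      have a: "real k powr (-5/2) = real k powr (-(2 + 1/2))" by simp
      have b: "real k powr (2 + 1/2) = real k ^ 2 * sqrt (real k)"
        using kpos by (simp only: powr_add powr_half_sqrt[OF less_imp_le[OF kpos]] powr_numeral[OF less_imp_le[OF kpos]])
      have "real k powr (-5/2) = inverse (real k ^ 2 * sqrt (real k))"
        unfolding a powr_minus b ..
      also have "\<dots> = 1 / ((real j + 1)^2 * sqrt (real j + 1))"
        by (simp only: k1 inverse_eq_divide)
      finally show ?thesis .
    qed
    define r where "r = Rf j"
    define y where "y = real j + 1"
    have y1: "y \<ge> 1" by (simp add: y_def)
    have sy: "sqrt y > 0" using y1 by simp
    have "r / (2 * (real j + 1) * (real j + 2)) \<le> 1 / (y^2 * sqrt y)"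
    proof (rule frac_le_helper)
      have "r * (y^2 * sqrt y) = (r * sqrt y) * y^2" by simp
      also have "\<dots> \<le> 1 * y^2" using sq unfolding r_def y_def by (rule mult_right_mono) auto
      also have "\<dots> \<le> 2 * (real j + 1) * (real j + 2)" by (simp add: y_def power2_eq_square algebra_simps)
      finally show "r * (y^2 * sqrt y) \<le> 2 * (real j + 1) * (real j + 2)" .
      show "0 < 2 * (real j + 1) * (real j + 2)" by simp
      show "0 < y^2 * sqrt y" using y1 sy by simp
    qed
    then show ?thesis unfolding kp r_def y_def .
  qed
  finally show ?thesis .
qed



lemma mvt_powr:
  fixes x y r :: real
  assumes "0 < x" "x < y"
  shows "\<exists>z. x < z \<and> z < y \<and> y powr r - x powr r = (y - x) * (r * z powr (r - 1))"
proof -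
  have d: "\<And>t. x \<le> t \<Longrightarrow> t \<le> y \<Longrightarrow> ((\<lambda>t. t powr r) has_real_derivative r * t powr (r - 1)) (at t)"
    using assms by (intro has_real_derivative_powr) auto
  show ?thesis using MVT2[OF assms(2) d] by auto
qed

lemma step_pos:
  fixes q :: real and n :: nat
  assumes "q \<ge> 0"
  shows "(real n + 1) powr q \<le> ((real n + 2) powr (q + 1) - (real n + 1) powr (q + 1)) / (q + 1)"
proof -
  obtain z where z: "real n + 1 < z" "z < real n + 2"
    "(real n + 2) powr (q+1) - (real n + 1) powr (q+1) = ((real n + 2) - (real n + 1)) * ((q+1) * z powr (q + 1 - 1))"
    using mvt_powr[of "real n + 1" "real n + 2" "q+1"] by auto
  have "(real n + 1) powr q \<le> z powr q" using z assms by (intro powr_mono2) auto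
  then have "(q+1) * (real n + 1) powr q \<le> (q+1) * z powr q" using assms by (intro mult_left_mono) auto
  then show ?thesis using z(3) assms by (subst pos_le_divide_eq) (auto simp: mult.commute)
qed

lemma step_neg:
  fixes q :: real and n :: nat
  assumes "q < 0" "q > -1"
  shows "(real n + 1) powr q \<le> ((real n + 1) powr (q + 1) - real n powr (q + 1)) / (q + 1)"
proof (cases "n = 0")
  case True
  then show ?thesis using assms by (simp add: field_simps)
next
  case False
  obtain z where z: "real n < z" "z < real n + 1"
    "(real n + 1) powr (q+1) - (real n) powr (q+1) = ((real n + 1) - real n) * ((q+1) * z powr (q + 1 - 1))"
    using mvt_powr[of "real n" "real n + 1" "q+1"] False by auto
  have "(real n + 1) powr q \<le> z powr q" using z assms False by (intro powr_mono2') auto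
  then have "(q+1) * (real n + 1) powr q \<le> (q+1) * z powr q" using assms by (intro mult_left_mono) auto
  then show ?thesis using z(3) assms by (subst pos_le_divide_eq) (auto simp: mult.commute)
qed

lemma sum_powr_le:
  fixes q :: real
  assumes "q > -1"
  shows "(\<Sum>k=1..n. real k powr q) \<le> (real n + 1) powr (q + 1) / (q + 1)"
proof (cases "q \<ge> 0")
  case True
  show ?thesis
  proof (induction n)
    case 0 then show ?case using assms by simp
  next
    case (Suc n)
    have "(\<Sum>k=1..Suc n. real k powr q) = (\<Sum>k=1..n. real k powr q) + (real n + 1) powr q"
      by (simp add: add.commute)
    also have "\<dots> \<le> (real n + 1) powr (q + 1) / (q + 1) + ((real n + 2) powr (q + 1) - (real n + 1) powr (q + 1)) / (q + 1)"
      using Suc step_pos[OF True, of n] by linarith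
    also have "\<dots> = (real (Suc n) + 1) powr (q + 1) / (q + 1)"
      by (simp add: diff_divide_distrib add_ac)
    finally show ?case .
  qed
next
  case False
  have "(\<Sum>k=1..n. real k powr q) \<le> real n powr (q + 1) / (q + 1)"
  proof (induction n)
    case 0 then show ?case using assms by simp
  next
    case (Suc n)
    have "(\<Sum>k=1..Suc n. real k powr q) = (\<Sum>k=1..n. real k powr q) + (real n + 1) powr q"
      by (simp add: add.commute)
    also have "\<dots> \<le> real n powr (q + 1) / (q + 1) + ((real n + 1) powr (q + 1) - real n powr (q + 1)) / (q + 1)"
      using Suc step_neg[of q n] False assms by linarith
    also have "\<dots> = real (Suc n) powr (q + 1) / (q + 1)"
      by (simp add: diff_divide_distrib add_ac)
    finally show ?case .
  qed
  also have "\<dots> \<le> (real n + 1) powr (q + 1) / (q + 1)"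
    using assms by (intro divide_right_mono powr_mono2) auto
  finally show ?thesis .
qed

lemma step_tail:
  fixes p :: real and n :: nat
  assumes "p > 1" "n \<ge> 1"
  shows "(real n + 1) powr (-p) \<le> (real n powr (1 - p) - (real n + 1) powr (1 - p)) / (p - 1)"
proof -
  obtain z where z: "real n < z" "z < real n + 1"
    "(real n + 1) powr (1-p) - (real n) powr (1-p) = ((real n + 1) - real n) * ((1-p) * z powr (1 - p - 1))"
    using mvt_powr[of "real n" "real n + 1" "1-p"] assms by auto
  have "(real n + 1) powr (-p) \<le> z powr (-p)" using z assms by (intro powr_mono2') auto
  moreover have "real n powr (1 - p) - (real n + 1) powr (1 - p) = (p - 1) * z powr (-p)"
    using z(3) by (simp add: algebra_simps)
  moreover have "(p-1) * (real n + 1) powr (-p) \<le> (p-1) * z powr (-p)"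
    using calculation(1) assms by (intro mult_left_mono) auto
  ultimately show ?thesis using assms by (subst pos_le_divide_eq) (auto simp: mult.commute)
qed

lemma tail_powr_le:
  fixes p :: real
  assumes "p > 1" "N \<ge> 1"
  shows "(\<Sum>k=Suc N..M. real k powr (-p)) \<le> real N powr (1 - p) / (p - 1)"
proof -
  have main: "(\<Sum>k=Suc N..N+d. real k powr (-p)) \<le> (real N powr (1 - p) - real (N+d) powr (1 - p)) / (p - 1)" for d
  proof (induction d)
    case 0 then show ?case by simp
  next
    case (Suc d)
    have "(\<Sum>k=Suc N..N + Suc d. real k powr (-p)) = (\<Sum>k=Suc N..N+d. real k powr (-p)) + (real (N+d) + 1) powr (-p)"
      by (simp add: add.commute)
    also have "\<dots> \<le> (real N powr (1 - p) - real (N+d) powr (1 - p)) / (p - 1)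
        + (real (N+d) powr (1 - p) - (real (N+d) + 1) powr (1 - p)) / (p - 1)"
      using Suc step_tail[OF assms(1), of "N+d"] assms(2) by linarith
    also have "\<dots> = (real N powr (1 - p) - real (N + Suc d) powr (1 - p)) / (p - 1)"
      by (simp add: diff_divide_distrib add_ac)
    finally show ?case .
  qed
  show ?thesis
  proof (cases "M \<le> N")
    case True
    then have "{Suc N..M} = {}" by auto
    then show ?thesis using assms by simp
  next
    case False
    then obtain d where "M = N + d" by (metis le_add_diff_inverse nat_le_linear)
    then have "(\<Sum>k=Suc N..M. real k powr (-p)) \<le> (real N powr (1 - p) - real (N+d) powr (1 - p)) / (p - 1)"
      using main by simp
    also have "\<dots> \<le> real N powr (1 - p) / (p - 1)"
      using assms by (intro divide_right_mono) auto
    finally show ?thesis .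
  qed
qed


lemma H_bound:
  fixes g b :: real
  assumes g: "g > 3/2" and b: "b \<ge> 1"
  shows "(\<Sum>k=1..m. real k powr (-5/2) * min (real k powr g / b) 1)
         \<le> (2 powr (g - 3/2) / (g - 3/2) + 2 powr (3/2) * (2/3)) * b powr (-3/(2*g))"
proof -
  have gpos: "g > 0" using g by simp
  define s where "s = b powr (1/g)"
  have s1: "s \<ge> 1" unfolding s_def using b gpos by (intro ge_one_powr_ge_zero) auto
  have sg: "s powr g = b"
    unfolding s_def powr_powr using gpos b by simp
  have e1: "1/g * (-3/2) = -3/(2*g)" using gpos by (simp add: field_simps)
  have s_m32: "s powr (-3/2) = b powr (-3/(2*g))"
    unfolding s_def powr_powr e1 ..
  define N where "N = nat \<lfloor>s\<rfloor>"
  have N_le: "real N \<le> s" unfolding N_def using s1 by linarith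
  have N_gt: "s < real N + 1" unfolding N_def using s1 by linarith
  have N1: "N \<ge> 1" unfolding N_def using s1 by linarith
  have N2: "s \<le> 2 * real N" using N_gt N1 by linarith
  define F where "F k = real k powr (-5/2) * min (real k powr g / b) 1" for k :: nat
  have Fnn: "F k \<ge> 0" for k unfolding F_def using b by auto
  have split: "(\<Sum>k=1..m. F k) \<le> (\<Sum>k=1..N. F k) + (\<Sum>k=Suc N..m. F k)"
  proof -
    have "(\<Sum>k=1..m. F k) \<le> (\<Sum>k\<in>{1..N} \<union> {Suc N..m}. F k)"
      by (rule sum_mono2) (auto simp: Fnn)
    also have "\<dots> = (\<Sum>k=1..N. F k) + (\<Sum>k=Suc N..m. F k)"
      by (rule sum.union_disjoint) auto
    finally show ?thesis .
  qed
  have A: "(\<Sum>k=1..N. F k) \<le> 2 powr (g - 3/2) / (g - 3/2) * s powr (-3/2)"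
  proof -
    have "(\<Sum>k=1..N. F k) \<le> (\<Sum>k=1..N. real k powr (g - 5/2) / b)"
    proof (rule sum_mono)
      fix k assume "k \<in> {1..N}"
      have "F k \<le> real k powr (-5/2) * (real k powr g / b)"
        unfolding F_def by (rule mult_left_mono) auto
      also have "\<dots> = (real k powr (-5/2) * real k powr g) / b" by simp
      also have "real k powr (-5/2) * real k powr g = real k powr (g - 5/2)"
        by (simp add: powr_add[symmetric])
      finally show "F k \<le> real k powr (g - 5/2) / b" .
    qed
    also have "\<dots> = (\<Sum>k=1..N. real k powr (g - 5/2)) / b"
      by (simp add: sum_divide_distrib)
    also have "\<dots> \<le> ((real N + 1) powr (g - 3/2) / (g - 3/2)) / b"
    proof (rule divide_right_mono)
      have "(\<Sum>k=1..N. real k powr (g - 5/2)) \<le> (real N + 1) powr (g - 5/2 + 1) / (g - 5/2 + 1)"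
        by (rule sum_powr_le) (use g in simp)
      also have "g - 5/2 + 1 = g - 3/2" by simp
      finally show "(\<Sum>k=1..N. real k powr (g - 5/2)) \<le> (real N + 1) powr (g - 3/2) / (g - 3/2)" .
    qed (use b in simp)
    also have "\<dots> \<le> ((2 * s) powr (g - 3/2) / (g - 3/2)) / b"
    proof -
      have "(real N + 1) powr (g - 3/2) \<le> (2 * s) powr (g - 3/2)"
        using g N_le s1 by (intro powr_mono2) auto
      then show ?thesis using g b by (intro divide_right_mono) auto
    qed
    also have "\<dots> = 2 powr (g - 3/2) / (g - 3/2) * (s powr (g - 3/2) / s powr g)"
      using sg by (simp add: powr_mult)
    also have "s powr (g - 3/2) / s powr g = s powr (-3/2)"
      by (simp add: powr_diff[symmetric])
    finally show ?thesis .
  qed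
  have B: "(\<Sum>k=Suc N..m. F k) \<le> 2 powr (3/2) * (2/3) * s powr (-3/2)"
  proof -
    have e: "(-5/2::real) = -(5/2)" by simp
    have "(\<Sum>k=Suc N..m. F k) \<le> (\<Sum>k=Suc N..m. real k powr (-(5/2)))"
    proof (rule sum_mono)
      fix k assume "k \<in> {Suc N..m}"
      have "F k \<le> real k powr (-5/2) * 1"
        unfolding F_def by (rule mult_left_mono) auto
      then show "F k \<le> real k powr (-(5/2))" by (simp only: e mult_1_right)
    qed
    also have "\<dots> \<le> real N powr (1 - 5/2) / (5/2 - 1)"
      by (rule tail_powr_le) (use N1 in auto)
    also have "\<dots> = (2/3) * real N powr (-3/2)" by simp
    also have "\<dots> \<le> (2/3) * (s/2) powr (-3/2)"
    proof -
      have "real N powr (-3/2) \<le> (s/2) powr (-3/2)"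
        using N2 s1 by (intro powr_mono2') auto
      then show ?thesis by simp
    qed
    also have "(s/2) powr (-3/2) = 2 powr (3/2) * s powr (-3/2)"
    proof -
      have "(s/2) powr (-3/2) = s powr (-3/2) / 2 powr (-3/2)" by (rule powr_divide)
      also have "(2::real) powr (-3/2) = inverse (2 powr (3/2))"
      proof -
        have "(-3/2::real) = -(3/2)" by simp
        then show ?thesis by (simp only: powr_minus)
      qed
      finally show ?thesis by (simp only: divide_inverse inverse_inverse_eq mult.commute)
    qed
    finally show ?thesis by (simp only: mult_ac)
  qed
  have "(\<Sum>k=1..m. F k) \<le> (2 powr (g - 3/2) / (g - 3/2) + 2 powr (3/2) * (2/3)) * s powr (-3/2)"
    using split A B distrib_right[of "2 powr (g - 3/2) / (g - 3/2)" "2 powr (3/2) * (2/3)" "s powr (-3/2)"] by linarith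
  then show ?thesis unfolding F_def s_m32 .
qed


lemma kernel_nonneg: "bmc_kernel m j \<ge> 0"
  unfolding bmc_kernel_def Let_def by (auto intro!: mult_nonneg_nonneg divide_nonneg_nonneg)

lemma kernel_up: "bmc_kernel m (Suc m) \<le> 1"
  unfolding bmc_kernel_def by simp

lemma kernel_diag: "bmc_kernel m m = 0"
  unfolding bmc_kernel_def by simp

lemma kernel_zero: "j > Suc m \<Longrightarrow> bmc_kernel m j = 0"
  unfolding bmc_kernel_def by simp

definition Cst :: "real \<Rightarrow> real" where
  "Cst g = 2 powr (g - 3/2) / (g - 3/2) + 2 powr (3/2) * (2/3) + 1"

lemma G_bound:
  fixes g b :: real
  assumes g: "g > 3/2" and b: "b \<ge> 1"
  shows "(\<Sum>j\<in>{..Suc m}. min (\<bar>real j - real m\<bar> powr g / b) 1 * bmc_kernel m j)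
         \<le> Cst g * b powr (-3/(2*g))"
proof -
  define f where "f j = min (\<bar>real j - real m\<bar> powr g / b) 1 * bmc_kernel m j" for j
  have fnn: "f j \<ge> 0" for j unfolding f_def using b kernel_nonneg by auto
  have set: "{..Suc m} = insert (Suc m) (insert m {..<m})" by auto
  have S: "(\<Sum>j\<in>{..Suc m}. f j) = f (Suc m) + f m + (\<Sum>j<m. f j)"
    unfolding set by (simp add: add.assoc)
  have fm: "f m = 0" unfolding f_def kernel_diag by simp
  have e32: "-1 \<le> -3/(2*g)" using g by (simp add: field_simps)
  have fS: "f (Suc m) \<le> b powr (-3/(2*g))"
  proof -
    have "f (Suc m) = min (1 / b) 1 * bmc_kernel m (Suc m)"
      unfolding f_def by simp
    also have "\<dots> \<le> min (1 / b) 1 * 1"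
      using kernel_up[of m] b by (intro mult_left_mono) auto
    also have "\<dots> \<le> 1 / b" by simp
    also have "1 / b = b powr (-1)" using b by (simp add: powr_minus divide_inverse)
    also have "\<dots> \<le> b powr (-3/(2*g))" using b e32 by (intro powr_mono) auto
    finally show ?thesis .
  qed
  have R: "(\<Sum>j<m. f j) = (\<Sum>k=1..m. f (m - k))"
    by (rule sum.reindex_bij_witness[of _ "\<lambda>k. m - k" "\<lambda>j. m - j"]) auto
  have T: "(\<Sum>k=1..m. f (m - k)) \<le> (\<Sum>k=1..m. real k powr (-5/2) * min (real k powr g / b) 1)"
  proof (rule sum_mono)
    fix k assume k: "k \<in> {1..m}"
    have a: "\<bar>real (m - k) - real m\<bar> = real k" using k by auto
    have "f (m - k) = min (real k powr g / b) 1 * bmc_kernel m (m - k)"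
      unfolding f_def a ..
    also have "\<dots> \<le> min (real k powr g / b) 1 * real k powr (-5/2)"
      using kernel_bound[of k m] k b by (intro mult_left_mono) auto
    finally show "f (m - k) \<le> real k powr (-5/2) * min (real k powr g / b) 1"
      by (simp add: mult.commute)
  qed
  have "(\<Sum>j\<in>{..Suc m}. f j) \<le> b powr (-3/(2*g)) + (2 powr (g - 3/2) / (g - 3/2) + 2 powr (3/2) * (2/3)) * b powr (-3/(2*g))"
    using S fm fS R T H_bound[OF g b, of m] by linarith
  also have "\<dots> = Cst g * b powr (-3/(2*g))" unfolding Cst_def by (simp add: algebra_simps)
  finally show ?thesis unfolding f_def .
qed


lemma expect_bound:
  fixes P :: "'a measure" and Mc :: "nat \<Rightarrow> 'a \<Rightarrow> nat"
  assumes bmc: "boundary_markov_chain P Mc m0"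
    and Bnd: "\<And>m. (\<integral>\<^sup>+j. \<phi> m j * ennreal (bmc_kernel m j) \<partial>count_space UNIV) \<le> Bd"
  shows "(\<integral>\<^sup>+\<omega>. \<phi> (Mc t \<omega>) (Mc (Suc t) \<omega>) \<partial>P) \<le> Bd"
proof -
  have ps: "prob_space P" using bmc unfolding boundary_markov_chain_def by blast
  interpret prob_space P by (rule ps)
  have meas[measurable]: "Mc n \<in> measurable P (count_space UNIV)" for n
    using bmc unfolding boundary_markov_chain_def by blast
  have mk: "measure P {\<omega> \<in> space P. (\<forall>i\<le>n. Mc i \<omega> = h i) \<and> Mc (Suc n) \<omega> = j}
        = measure P {\<omega> \<in> space P. \<forall>i\<le>n. Mc i \<omega> = h i} * bmc_kernel (h n) j" for n h j
    using bmc unfolding boundary_markov_chain_def by blast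
  define L where "L = {l :: nat list. length l = Suc t}"
  define Bs where "Bs l = {\<omega> \<in> space P. \<forall>i\<le>t. Mc i \<omega> = l ! i}" for l
  define As where "As l j = {\<omega> \<in> space P. (\<forall>i\<le>t. Mc i \<omega> = l ! i) \<and> Mc (Suc t) \<omega> = j}" for l j
  have Bs_sets[measurable]: "Bs l \<in> sets P" for l unfolding Bs_def by measurable
  have As_sets[measurable]: "As l j \<in> sets P" for l j unfolding As_def by measurable
  have cL: "countable L" by (rule countable_subset[OF subset_UNIV]) simp
  define l0 where "l0 \<omega> = map (\<lambda>i. Mc i \<omega>) [0..<Suc t]" for \<omega>
  have l0L: "l0 \<omega> \<in> L" for \<omega> unfolding l0_def L_def by simp
  have l0t: "l0 \<omega> ! t = Mc t \<omega>" for \<omega> unfolding l0_def by (simp del: upt_Suc)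
  have indB: "indicator (Bs l) \<omega> = (indicator {l0 \<omega>} l :: ennreal)" if "l \<in> L" "\<omega> \<in> space P" for l \<omega>
  proof -
    have "(\<omega> \<in> Bs l) = (l = l0 \<omega>)"
    proof
      assume "\<omega> \<in> Bs l"
      then have "\<forall>i\<le>t. Mc i \<omega> = l ! i" unfolding Bs_def by auto
      then show "l = l0 \<omega>" using that(1) unfolding l0_def L_def
        by (intro nth_equalityI) (auto simp del: upt_Suc)
    next
      assume "l = l0 \<omega>"
      then show "\<omega> \<in> Bs l" using that(2) unfolding Bs_def l0_def
        by (auto simp del: upt_Suc simp: nth_map_upt)
    qed
    then show ?thesis unfolding indicator_def by auto
  qed
  have pick: "(\<integral>\<^sup>+l. \<Phi> l * indicator (Bs l) \<omega> \<partial>count_space L) = \<Phi> (l0 \<omega>)"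
    if "\<omega> \<in> space P" for \<Phi> \<omega>
  proof -
    have "(\<integral>\<^sup>+l. \<Phi> l * indicator (Bs l) \<omega> \<partial>count_space L) = (\<integral>\<^sup>+l. \<Phi> l * indicator {l0 \<omega>} l \<partial>count_space L)"
      by (rule nn_integral_cong) (simp add: indB that)
    also have "\<dots> = \<Phi> (l0 \<omega>) * emeasure (count_space L) {l0 \<omega>}"
      by (rule nn_integral_indicator_singleton) (simp add: l0L)
    also have "\<dots> = \<Phi> (l0 \<omega>)" using l0L by simp
    finally show ?thesis .
  qed
  have indA: "indicator (As l j) \<omega> = (indicator (Bs l) \<omega> * indicator {Mc (Suc t) \<omega>} j :: ennreal)"
    if "\<omega> \<in> space P" for l j \<omega>
    using that unfolding As_def Bs_def indicator_def by auto
  have pick2: "(\<integral>\<^sup>+j. \<psi> j * indicator (As l j) \<omega> \<partial>count_space UNIV) = \<psi> (Mc (Suc t) \<omega>) * indicator (Bs l) \<omega>"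
    if "\<omega> \<in> space P" for l \<psi> \<omega>
  proof -
    have "(\<integral>\<^sup>+j. \<psi> j * indicator (As l j) \<omega> \<partial>count_space UNIV)
        = (\<integral>\<^sup>+j. (\<psi> j * indicator (Bs l) \<omega>) * indicator {Mc (Suc t) \<omega>} j \<partial>count_space UNIV)"
      by (rule nn_integral_cong) (simp add: indA that mult.assoc)
    also have "\<dots> = (\<psi> (Mc (Suc t) \<omega>) * indicator (Bs l) \<omega>) * emeasure (count_space UNIV) {Mc (Suc t) \<omega>}"
      by (rule nn_integral_indicator_singleton) simp
    also have "\<dots> = \<psi> (Mc (Suc t) \<omega>) * indicator (Bs l) \<omega>" by simp
    finally show ?thesis .
  qed
  have markov_e: "emeasure P (As l j) = emeasure P (Bs l) * ennreal (bmc_kernel (l ! t) j)" for l j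
  proof -
    have "measure P (As l j) = measure P (Bs l) * bmc_kernel (l ! t) j"
      unfolding As_def Bs_def using mk[of t "\<lambda>i. l ! i" j] by simp
    then show ?thesis
      by (simp add: emeasure_eq_measure ennreal_mult kernel_nonneg)
  qed
  have step_l: "(\<integral>\<^sup>+\<omega>. \<phi> (l ! t) (Mc (Suc t) \<omega>) * indicator (Bs l) \<omega> \<partial>P) \<le> emeasure P (Bs l) * Bd" for l
  proof -
    have "(\<integral>\<^sup>+\<omega>. \<phi> (l ! t) (Mc (Suc t) \<omega>) * indicator (Bs l) \<omega> \<partial>P)
        = (\<integral>\<^sup>+\<omega>. (\<integral>\<^sup>+j. \<phi> (l ! t) j * indicator (As l j) \<omega> \<partial>count_space UNIV) \<partial>P)"
      by (rule nn_integral_cong) (simp add: pick2)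
    also have "\<dots> = (\<integral>\<^sup>+j. (\<integral>\<^sup>+\<omega>. \<phi> (l ! t) j * indicator (As l j) \<omega> \<partial>P) \<partial>count_space UNIV)"
      by (rule nn_integral_count_space_nn_integral) auto
    also have "\<dots> = (\<integral>\<^sup>+j. \<phi> (l ! t) j * emeasure P (As l j) \<partial>count_space UNIV)"
      by (rule nn_integral_cong) (simp add: nn_integral_cmult_indicator)
    also have "\<dots> = (\<integral>\<^sup>+j. emeasure P (Bs l) * (\<phi> (l ! t) j * ennreal (bmc_kernel (l ! t) j)) \<partial>count_space UNIV)"
      by (rule nn_integral_cong) (simp add: markov_e mult_ac)
    also have "\<dots> = emeasure P (Bs l) * (\<integral>\<^sup>+j. \<phi> (l ! t) j * ennreal (bmc_kernel (l ! t) j) \<partial>count_space UNIV)"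
      by (rule nn_integral_cmult) simp
    also have "\<dots> \<le> emeasure P (Bs l) * Bd"
      by (rule mult_left_mono[OF Bnd]) simp
    finally show ?thesis .
  qed
  have total: "(\<integral>\<^sup>+l. emeasure P (Bs l) \<partial>count_space L) = 1"
  proof -
    have "(\<integral>\<^sup>+l. emeasure P (Bs l) \<partial>count_space L) = (\<integral>\<^sup>+l. (\<integral>\<^sup>+\<omega>. 1 * indicator (Bs l) \<omega> \<partial>P) \<partial>count_space L)"
      by (rule nn_integral_cong) simp
    also have "\<dots> = (\<integral>\<^sup>+\<omega>. (\<integral>\<^sup>+l. 1 * indicator (Bs l) \<omega> \<partial>count_space L) \<partial>P)"
      by (rule nn_integral_count_space_nn_integral[symmetric]) (auto simp: cL)
    also have "\<dots> = (\<integral>\<^sup>+\<omega>. 1 \<partial>P)"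
      by (rule nn_integral_cong) (simp only: pick)
    also have "\<dots> = 1" by (simp add: emeasure_space_1)
    finally show ?thesis .
  qed
  have "(\<integral>\<^sup>+\<omega>. \<phi> (Mc t \<omega>) (Mc (Suc t) \<omega>) \<partial>P)
      = (\<integral>\<^sup>+\<omega>. (\<integral>\<^sup>+l. \<phi> (l ! t) (Mc (Suc t) \<omega>) * indicator (Bs l) \<omega> \<partial>count_space L) \<partial>P)"
    by (rule nn_integral_cong) (simp add: pick l0t)
  also have "\<dots> = (\<integral>\<^sup>+l. (\<integral>\<^sup>+\<omega>. \<phi> (l ! t) (Mc (Suc t) \<omega>) * indicator (Bs l) \<omega> \<partial>P) \<partial>count_space L)"
    by (rule nn_integral_count_space_nn_integral) (auto simp: cL)
  also have "\<dots> \<le> (\<integral>\<^sup>+l. emeasure P (Bs l) * Bd \<partial>count_space L)"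
    by (rule nn_integral_mono) (rule step_l)
  also have "\<dots> = (\<integral>\<^sup>+l. emeasure P (Bs l) \<partial>count_space L) * Bd"
    by (rule nn_integral_multc) simp
  also have "\<dots> = Bd" by (simp add: total)
  finally show ?thesis .
qed




lemma det_bound:
  fixes y bb a :: "nat \<Rightarrow> real" and K :: real
  assumes ynn: "\<And>t. y t \<ge> 0" and bb1: "\<And>t. bb t \<ge> 1"
    and bbmono: "\<And>t T. t \<le> T \<Longrightarrow> bb t \<le> bb T"
    and bbK: "\<And>T. T \<ge> 3 \<Longrightarrow> bb T \<le> K * a T"
    and apos: "\<And>T. T \<ge> 3 \<Longrightarrow> a T > 0"
    and fin: "(\<Sum>t. ennreal (min (y t / bb t) 1)) \<noteq> \<top>"
  shows "limsup (\<lambda>T. ereal ((\<Sum>t<T. y t) / a T)) < \<infinity>"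
proof -
  define z where "z t = min (y t / bb t) 1" for t
  have znn: "z t \<ge> 0" for t unfolding z_def using ynn bb1[of t] by auto
  have sz: "summable z" using fin znn unfolding z_def by (intro summable_suminf_not_top) auto
  have "z \<longlonglongrightarrow> 0" by (rule summable_LIMSEQ_zero[OF sz])
  then have ev: "eventually (\<lambda>t. z t < 1) sequentially"
    by (rule order_tendstoD) simp
  define w where "w t = y t / bb t" for t
  have wnn: "w t \<ge> 0" for t unfolding w_def using ynn bb1[of t] by auto
  have "eventually (\<lambda>t. z t = w t) sequentially"
    using ev by eventually_elim (auto simp: z_def w_def min_def split: if_splits)
  then have sw: "summable w" using sz summable_cong by blast
  define S where "S = suminf w"
  have S0: "S \<ge> 0" unfolding S_def using sw wnn by (intro suminf_nonneg) auto
  have bnd: "(\<Sum>t<T. y t) / a T \<le> K * S" if T: "T \<ge> 3" for T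
  proof -
    have "(\<Sum>t<T. y t) = (\<Sum>t<T. bb t * w t)"
    proof (rule sum.cong[OF refl])
      fix t assume "t \<in> {..<T}"
      have "bb t \<noteq> 0" using bb1[of t] by linarith
      then show "y t = bb t * w t" unfolding w_def by simp
    qed
    also have "\<dots> \<le> (\<Sum>t<T. bb T * w t)"
      using bbmono wnn by (intro sum_mono mult_right_mono) auto
    also have "\<dots> = bb T * (\<Sum>t<T. w t)" by (simp add: sum_distrib_left)
    also have "\<dots> \<le> bb T * S"
      unfolding S_def using sw wnn bb1[of T] by (intro mult_left_mono sum_le_suminf) auto
    also have "\<dots> \<le> K * a T * S" using bbK[OF T] S0 by (rule mult_right_mono)
    finally have "(\<Sum>t<T. y t) \<le> (K * S) * a T" by (simp add: mult_ac)
    then show ?thesis using apos[OF T] by (simp add: divide_le_eq)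
  qed
  have "limsup (\<lambda>T. ereal ((\<Sum>t<T. y t) / a T)) \<le> ereal (K * S)"
  proof (rule Limsup_bounded)
    have "\<forall>T\<ge>3. ereal ((\<Sum>t<T. y t) / a T) \<le> ereal (K * S)" using bnd by simp
    then show "eventually (\<lambda>T. ereal ((\<Sum>t<T. y t) / a T) \<le> ereal (K * S)) sequentially"
      unfolding eventually_sequentially by blast
  qed
  moreover have "ereal (K * S) < \<infinity>" by simp
  ultimately show ?thesis by (rule le_less_trans)
qed

lemma summable_log:
  fixes d :: real
  assumes d: "d > 0"
  shows "summable (\<lambda>n. (real n + 3) powr (-1) * ln (real n + 3) powr (-(1+d)))"
proof -
  define h where "h n = (real n + 3) powr (-1) * ln (real n + 3) powr (-(1+d))" for n :: nat
  have l1: "ln (real n + 3) \<ge> 1" for n :: nat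
  proof -
    have "exp 1 \<le> real n + 3" using exp_le by linarith
    then have "ln (exp 1) \<le> ln (real n + 3)" by (subst ln_le_cancel_iff) auto
    then show ?thesis by simp
  qed
  have hnn: "h n \<ge> 0" for n unfolding h_def by simp
  have hmono: "h (Suc m) \<le> h m" for m
  proof -
    have a: "(real (Suc m) + 3) powr (-1) \<le> (real m + 3) powr (-1)"
      by (intro powr_mono2') auto
    have "ln (real m + 3) \<le> ln (real (Suc m) + 3)" by simp
    then have b: "ln (real (Suc m) + 3) powr (-(1+d)) \<le> ln (real m + 3) powr (-(1+d))"
      using l1[of m] d by (intro powr_mono2') auto
    show ?thesis unfolding h_def using a b by (intro mult_mono) auto
  qed
  define c where "c = ln 2 powr (-(1+d))"
  have sg: "summable (\<lambda>n. c * real n powr (-(1+d)))"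
    using d by (intro summable_mult) (simp add: summable_real_powr_iff)
  have "summable (\<lambda>n. 2^n * h (2^n))"
  proof (rule summable_comparison_test'[OF sg, of 1])
    fix n :: nat assume n: "n \<ge> 1"
    have x0: "(2::real)^n > 0" by simp
    have x3: "(2::real)^n + 3 > 0" using x0 by linarith
    have "2^n * h (2^n) = (2^n / (2^n + 3)) * ln (2^n + 3) powr (-(1+d))"
      unfolding h_def by (simp add: powr_minus divide_inverse)
    also have "\<dots> \<le> 1 * ln (2^n + 3) powr (-(1+d))"
    proof (rule mult_right_mono)
      have "(2::real)^n + 3 > 0" using x0 by linarith
      then show "(2::real)^n / (2^n + 3) \<le> 1" by (simp add: divide_le_eq)
    qed simp
    also have "\<dots> \<le> ln ((2::real)^n) powr (-(1+d))"
    proof -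
      have "ln ((2::real)^n) > 0" using n by simp
      moreover have "ln ((2::real)^n) \<le> ln (2^n + 3)" using x0 x3 by (subst ln_le_cancel_iff) auto
      ultimately show ?thesis using d by (simp add: powr_mono2')
    qed
    also have "ln ((2::real)^n) = real n * ln 2" by (simp add: ln_realpow)
    also have "(real n * ln 2) powr (-(1+d)) = c * real n powr (-(1+d))"
      unfolding c_def by (simp add: powr_mult)
    finally show "norm (2^n * h (2^n)) \<le> c * real n powr (-(1+d))"
      using hnn by simp
  qed
  then have "summable h" using condensation_test[of h] hmono hnn by blast
  then show ?thesis unfolding h_def .
qed


lemma ln_ge1: "ln (real n + 3) \<ge> 1" for n :: nat
proof -
  have "exp 1 \<le> real n + 3" using exp_le by linarith
  then have "ln (exp 1) \<le> ln (real n + 3)" by (subst ln_le_cancel_iff) auto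
  then show ?thesis by simp
qed

theorem lemma5p1:
  fixes P :: "'a measure" and Mc :: "nat \<Rightarrow> 'a \<Rightarrow> nat" and m0 :: nat
    and \<gamma> \<epsilon> :: real
  assumes "boundary_markov_chain P Mc m0"
    and "\<gamma> > 3 / 2" and "\<epsilon> > 0"
  shows "AE \<omega> in P.
           limsup (\<lambda>T. ereal (bmc_V Mc \<gamma> T \<omega> /
              (real T powr (2 * \<gamma> / 3) * ln (real T) powr (2 * \<gamma> / 3 + \<epsilon>)))) < \<infinity>"
proof -
  note bmc = assms(1)
  have g: "\<gamma> > 3/2" using assms(2) by simp
  have e: "\<epsilon> > 0" using assms(3) .
  have gpos: "\<gamma> > 0" using g by simp
  have ps: "prob_space P" using bmc unfolding boundary_markov_chain_def by blast
  interpret prob_space P by (rule ps)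
  have meas[measurable]: "Mc n \<in> measurable P (count_space UNIV)" for n
    using bmc unfolding boundary_markov_chain_def by blast
  define p where "p = 2 * \<gamma> / 3"
  define q where "q = 2 * \<gamma> / 3 + \<epsilon>"
  have p1: "p > 1" unfolding p_def using g by simp
  have q0: "q > 0" unfolding q_def using g e by simp
  define bb where "bb t = (real t + 3) powr p * ln (real t + 3) powr q" for t :: nat
  define a where "a T = real T powr p * ln (real T) powr q" for T :: nat
  define y where "y t \<omega> = \<bar>real (Mc (Suc t) \<omega>) - real (Mc t \<omega>)\<bar> powr \<gamma>" for t \<omega>
  have bb1: "bb t \<ge> 1" for t
  proof -
    have "1 \<le> (real t + 3) powr p" using p1 by (intro ge_one_powr_ge_zero) auto
    moreover have "1 \<le> ln (real t + 3) powr q" using q0 ln_ge1[of t] by (intro ge_one_powr_ge_zero) auto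
    ultimately have "1 * 1 \<le> (real t + 3) powr p * ln (real t + 3) powr q"
      by (intro mult_mono) auto
    then show ?thesis unfolding bb_def by simp
  qed
  have bbmono: "bb t \<le> bb T" if "t \<le> T" for t T
  proof -
    have "(real t + 3) powr p \<le> (real T + 3) powr p" using that p1 by (intro powr_mono2) auto
    moreover have "ln (real t + 3) \<le> ln (real T + 3)" using that by (subst ln_le_cancel_iff) auto
    then have "ln (real t + 3) powr q \<le> ln (real T + 3) powr q"
      using q0 ln_ge1[of t] by (intro powr_mono2) auto
    ultimately show ?thesis unfolding bb_def by (intro mult_mono) auto
  qed
  define K where "K = 2 powr p * 2 powr q"
  have bbK: "bb T \<le> K * a T" if T: "T \<ge> 3" for T
  proof -
    have T3: "real T \<ge> 3" using T by simp
    have A: "(real T + 3) powr p \<le> 2 powr p * real T powr p"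
    proof -
      have "(real T + 3) powr p \<le> (2 * real T) powr p" using T3 p1 by (intro powr_mono2) auto
      also have "\<dots> = 2 powr p * real T powr p" by (rule powr_mult)
      finally show ?thesis .
    qed
    have B: "ln (real T + 3) powr q \<le> 2 powr q * ln (real T) powr q"
    proof -
      have "3 * real T \<le> real T * real T" using T3 by (intro mult_right_mono) auto
      then have "real T + 3 \<le> real T * real T" using T3 by linarith
      then have "ln (real T + 3) \<le> ln (real T * real T)" using T3 by (subst ln_le_cancel_iff) auto
      also have "\<dots> = 2 * ln (real T)" using T3 by (simp add: ln_mult)
      finally have "ln (real T + 3) \<le> 2 * ln (real T)" .
      moreover have "ln (real T + 3) \<ge> 0" using ln_ge1[of T] by simp
      ultimately have "ln (real T + 3) powr q \<le> (2 * ln (real T)) powr q"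
        using q0 by (intro powr_mono2) auto
      also have "\<dots> = 2 powr q * ln (real T) powr q" by (rule powr_mult)
      finally show ?thesis .
    qed
    have "bb T \<le> (2 powr p * real T powr p) * (2 powr q * ln (real T) powr q)"
      unfolding bb_def using A B by (intro mult_mono) auto
    also have "\<dots> = K * a T" unfolding K_def a_def by (simp add: mult_ac)
    finally show ?thesis .
  qed
  have apos: "a T > 0" if T: "T \<ge> 3" for T
  proof -
    have T3: "real T \<ge> 3" using T by simp
    have "ln (real T) > 0" using T3 by simp
    then show ?thesis unfolding a_def using T3 by simp
  qed
  define c where "c t = Cst \<gamma> * bb t powr (-3/(2*\<gamma>))" for t
  have Cpos: "Cst \<gamma> > 0"
  proof -
    have "2 powr (\<gamma> - 3/2) / (\<gamma> - 3/2) > 0" using g by simp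
    moreover have "2 powr (3/2) * (2/3) > (0::real)" by simp
    ultimately show ?thesis unfolding Cst_def by linarith
  qed
  have cnn: "c t \<ge> 0" for t unfolding c_def using Cpos by simp
  have key: "(\<integral>\<^sup>+\<omega>. ennreal (min (y t \<omega> / bb t) 1) \<partial>P) \<le> ennreal (c t)" for t
  proof -
    have "(\<integral>\<^sup>+\<omega>. (\<lambda>m j. ennreal (min (\<bar>real j - real m\<bar> powr \<gamma> / bb t) 1)) (Mc t \<omega>) (Mc (Suc t) \<omega>) \<partial>P) \<le> ennreal (c t)"
    proof (rule expect_bound[OF bmc])
      fix m
      define f where "f j = min (\<bar>real j - real m\<bar> powr \<gamma> / bb t) 1 * bmc_kernel m j" for j
      have fnn: "f j \<ge> 0" for j unfolding f_def using bb1[of t] kernel_nonneg[of m j] by auto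
      have "(\<integral>\<^sup>+j. ennreal (min (\<bar>real j - real m\<bar> powr \<gamma> / bb t) 1) * ennreal (bmc_kernel m j) \<partial>count_space UNIV)
          = (\<integral>\<^sup>+j. ennreal (f j) \<partial>count_space UNIV)"
        unfolding f_def by (rule nn_integral_cong) (simp add: ennreal_mult'' kernel_nonneg)
      also have "\<dots> = (\<Sum>j. ennreal (f j))" by (rule nn_integral_count_space_nat)
      also have "\<dots> = (\<Sum>j\<in>{..Suc m}. ennreal (f j))"
        by (rule suminf_finite) (auto simp: f_def kernel_zero)
      also have "\<dots> = ennreal (\<Sum>j\<in>{..Suc m}. f j)" by (rule sum_ennreal) (rule fnn)
      also have "\<dots> \<le> ennreal (c t)"
        unfolding f_def c_def by (rule ennreal_leI) (rule G_bound[OF g bb1])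
      finally show "(\<integral>\<^sup>+j. ennreal (min (\<bar>real j - real m\<bar> powr \<gamma> / bb t) 1) * ennreal (bmc_kernel m j) \<partial>count_space UNIV) \<le> ennreal (c t)" .
    qed
    then show ?thesis unfolding y_def by simp
  qed
  have summ: "summable c"
  proof -
    define d where "d = 3 * \<epsilon> / (2 * \<gamma>)"
    have d0: "d > 0" unfolding d_def using e gpos by simp
    have e1: "p * (-3/(2*\<gamma>)) = -1" unfolding p_def using gpos by (simp add: field_simps)
    have e2: "q * (-3/(2*\<gamma>)) = -(1+d)" unfolding q_def d_def using gpos by (simp add: field_simps)
    have "c t = Cst \<gamma> * ((real t + 3) powr (-1) * ln (real t + 3) powr (-(1+d)))" for t
    proof -
      have "bb t powr (-3/(2*\<gamma>)) = ((real t + 3) powr p) powr (-3/(2*\<gamma>)) * (ln (real t + 3) powr q) powr (-3/(2*\<gamma>))"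
        unfolding bb_def by (rule powr_mult)
      also have "\<dots> = (real t + 3) powr (-1) * ln (real t + 3) powr (-(1+d))"
        by (simp only: powr_powr e1 e2)
      finally show ?thesis unfolding c_def by simp
    qed
    then have "c = (\<lambda>t. Cst \<gamma> * ((real t + 3) powr (-1) * ln (real t + 3) powr (-(1+d))))" by (intro ext)
    then show ?thesis by (simp only:) (rule summable_mult[OF summable_log[OF d0]])
  qed
  define Z where "Z \<omega> = (\<Sum>t. ennreal (min (y t \<omega> / bb t) 1))" for \<omega>
  have ymeas[measurable]: "(\<lambda>\<omega>. ennreal (min (y t \<omega> / bb t) 1)) \<in> borel_measurable P" for t
    unfolding y_def by measurable
  have Zmeas: "Z \<in> borel_measurable P" unfolding Z_def by measurable
  have "(\<integral>\<^sup>+\<omega>. Z \<omega> \<partial>P) = (\<Sum>t. \<integral>\<^sup>+\<omega>. ennreal (min (y t \<omega> / bb t) 1) \<partial>P)"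
    unfolding Z_def by (rule nn_integral_suminf) simp
  also have "\<dots> \<le> (\<Sum>t. ennreal (c t))"
    by (rule suminf_le[OF key summableI summableI])
  also have "\<dots> = ennreal (\<Sum>t. c t)" by (rule suminf_ennreal2[OF cnn summ])
  finally have "(\<integral>\<^sup>+\<omega>. Z \<omega> \<partial>P) \<noteq> \<infinity>"
    by (cases "(\<integral>\<^sup>+\<omega>. Z \<omega> \<partial>P) = \<infinity>") (auto simp: top_unique)
  then have "AE \<omega> in P. Z \<omega> \<noteq> \<infinity>" by (rule nn_integral_noteq_infinite[OF Zmeas])
  then show ?thesis
  proof (rule eventually_mono)
    fix \<omega> assume Zf: "Z \<omega> \<noteq> \<infinity>"
    have "limsup (\<lambda>T. ereal ((\<Sum>t<T. y t \<omega>) / a T)) < \<infinity>"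
    proof (rule det_bound[of "\<lambda>t. y t \<omega>" bb K a])
      show "\<And>t. 0 \<le> y t \<omega>" unfolding y_def by simp
      show "(\<Sum>t. ennreal (min (y t \<omega> / bb t) 1)) \<noteq> \<top>" using Zf unfolding Z_def by simp
    qed (use bb1 bbmono bbK apos in auto)
    then show "limsup (\<lambda>T. ereal (bmc_V Mc \<gamma> T \<omega> /
              (real T powr (2 * \<gamma> / 3) * ln (real T) powr (2 * \<gamma> / 3 + \<epsilon>)))) < \<infinity>"
      unfolding bmc_V_def a_def p_def q_def y_def .
  qed
qed

end
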